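(* Let $N\ge1$ and $\kappa,h,\nu,g\in\mathbb{C}$ with $h\neq0$. The matrix $K=K^{\mathrm{ra}}(\nu,g)$ satisfies $K^2=I$ and the constant reflection equation $\check R_{12}K_2\check R_{12}K_2=K_2\check R_{12}K_2\check R_{12}$, where $\check R=R^{\mathrm{ra}}(\kappa,h)P$.
   Context: $V=\mathbb{C}^N$ with basis $e_0,\dots,e_{N-1}$; $Ae_j=\sum_ke_k[A]_j^k$; $R(e_i\otimes e_j)=\sum_{k,l}[R]_{ij}^{kl}e_k\otimes e_l$; $P$ flip; $K_2=I\otimes K$. Binomial convention: $\binom{a}{b}=0$ unless $0\le b\le a$; $0^0=1$. $\epsilon(i,m,k)=1$ if $i\le k<m$, $-1$ if $m\le k<i$, $0$ otherwise. $$[R^{\mathrm{ra}}(\kappa,h)]_{ij}^{kl}=(-1)^{j-l}h^{i+j-k-l}\Big\{\binom{i}{k}\binom{j}{l}-\frac{\kappa}{h}\sum_m(-1)^{m-k}\binom{i}{m}\binom{j+m-k-1}{l}\epsilon(j,m,k)\Big\},$$ $$[K^{\mathrm{ra}}(\nu,g)]_j^k=(-1)^j\binom{j}{k}g^{j-k}+2\nu\sum_{0\le l<j}(-1)^{j-l}\binom{j-l-1}{k-l}g^{j-k-1}.$$ *)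

theory Defs
  imports Complex_Main
begin

text \<open>Matrices/operators are functions from (input index, output index) to coefficients:
  A e_j = sum_k e_k A j k. Indices of V = C^N are naturals < N; indices of V (x) V are pairs.\<close>

definition bin :: "int \<Rightarrow> int \<Rightarrow> complex" where
  "bin a b = (if 0 \<le> b \<and> b \<le> a then of_nat (nat a choose nat b) else 0)"

definition eps :: "int \<Rightarrow> int \<Rightarrow> int \<Rightarrow> complex" where
  "eps i m k = (if i \<le> k \<and> k < m then 1 else if m \<le> k \<and> k < i then -1 else 0)"

text \<open>R^ra(kappa,h): coefficient of e_k (x) e_l in R(e_i (x) e_j). The sum over m is
  restricted to 0..i, outside of which binom i m vanishes.\<close>
definition Rra :: "complex \<Rightarrow> complex \<Rightarrow> nat \<times> nat \<Rightarrow> nat \<times> nat \<Rightarrow> complex" where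
  "Rra \<kappa> h ij kl = (case ij of (i0, j0) \<Rightarrow> case kl of (k0, l0) \<Rightarrow>
     let i = int i0; j = int j0; k = int k0; l = int l0 in
     (-1) powi (j - l) * h powi (i + j - k - l) *
     (bin i k * bin j l - \<kappa> / h *
        (\<Sum>m\<in>{0..i}. (-1) powi (m - k) * bin i m * bin (j + m - k - 1) l * eps j m k)))"

definition Kra :: "complex \<Rightarrow> complex \<Rightarrow> nat \<Rightarrow> nat \<Rightarrow> complex" where
  "Kra \<nu> g j0 k0 = (let j = int j0; k = int k0 in
     (-1) powi j * bin j k * g powi (j - k) +
     2 * \<nu> * (\<Sum>l\<in>{0..<j}. (-1) powi (j - l) * bin (j - l - 1) (k - l) * g powi (j - k - 1)))"

text \<open>Composition of operators on a finite basis index set S: (A B) e_j = A (B e_j).\<close>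
definition mcomp :: "'i set \<Rightarrow> ('i \<Rightarrow> 'i \<Rightarrow> complex) \<Rightarrow> ('i \<Rightarrow> 'i \<Rightarrow> complex) \<Rightarrow> 'i \<Rightarrow> 'i \<Rightarrow> complex" where
  "mcomp S A B j m = (\<Sum>k\<in>S. B j k * A k m)"

definition idm :: "'i \<Rightarrow> 'i \<Rightarrow> complex" where
  "idm j k = (if j = k then 1 else 0)"

definition flip :: "nat \<times> nat \<Rightarrow> nat \<times> nat \<Rightarrow> complex" where
  "flip ij kl = (if kl = (snd ij, fst ij) then 1 else 0)"

definition K2 :: "(nat \<Rightarrow> nat \<Rightarrow> complex) \<Rightarrow> nat \<times> nat \<Rightarrow> nat \<times> nat \<Rightarrow> complex" where
  "K2 K ij kl = (if fst kl = fst ij then K (snd ij) (snd kl) else 0)"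

definition idx2 :: "nat \<Rightarrow> (nat \<times> nat) set" where
  "idx2 N = {0..<N} \<times> {0..<N}"

definition Rcheck :: "nat \<Rightarrow> complex \<Rightarrow> complex \<Rightarrow> nat \<times> nat \<Rightarrow> nat \<times> nat \<Rightarrow> complex" where
  "Rcheck N \<kappa> h = mcomp (idx2 N) (Rra \<kappa> h) flip"

end

theory Submission
  imports Defs "HOL-Computational_Algebra.Polynomial"
begin

lemma poly1_zero:
  fixes c :: "nat \<Rightarrow> complex"
  assumes E: "finite E" and z: "\<And>x. x \<notin> E \<Longrightarrow> (\<Sum>k<N. c k * x^k) = 0" and k: "k < N"
  shows "c k = 0"
proof -
  define p where "p = (\<Sum>k<N. monom (c k) k)"
  have pv: "poly p x = (\<Sum>k<N. c k * x^k)" for x by (simp add: p_def poly_sum poly_monom)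
  have "p = 0"
  proof (rule ccontr)
    assume "p \<noteq> 0"
    hence "finite {x. poly p x = 0}" by (rule poly_roots_finite)
    moreover have "- E \<subseteq> {x. poly p x = 0}" using z pv by auto
    moreover have "infinite (- E)" using E by (simp add: Compl_eq_Diff_UNIV infinite_UNIV_char_0)
    ultimately show False using finite_subset by blast
  qed
  hence "coeff p k = 0" by simp
  moreover have "coeff p k = c k" using k by (simp add: p_def coeff_sum)
  ultimately show ?thesis by simp
qed

lemma poly2_zero:
  fixes c :: "nat \<times> nat \<Rightarrow> complex"
  assumes Y: "finite Y" and F: "\<And>y. y \<notin> Y \<Longrightarrow> finite (F y)"
    and z: "\<And>x y. y \<notin> Y \<Longrightarrow> x \<notin> F y \<Longrightarrow> (\<Sum>kl\<in>{0..<N}\<times>{0..<N}. c kl * x^fst kl * y^snd kl) = 0"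
    and k: "k < N" and l: "l < N"
  shows "c (k,l) = 0"
proof -
  have "(\<Sum>l<N. c (k,l) * y^l) = 0" if y: "y \<notin> Y" for y
  proof (rule poly1_zero[OF F[OF y], of "\<lambda>k. \<Sum>l<N. c (k,l) * y^l"])
    fix x assume "x \<notin> F y"
    have "(\<Sum>kl\<in>{0..<N}\<times>{0..<N}. c kl * x^fst kl * y^snd kl) = (\<Sum>k<N. \<Sum>l<N. c (k,l) * x^k * y^l)"
      by (simp add: sum.cartesian_product atLeast0LessThan case_prod_beta)
    also have "\<dots> = (\<Sum>k<N. (\<Sum>l<N. c (k, l) * y ^ l) * x ^ k)"
      by (simp add: sum_distrib_right sum_distrib_left mult_ac)
    finally show "(\<Sum>k<N. (\<Sum>l<N. c (k, l) * y ^ l) * x ^ k) = 0" using z[OF y \<open>x \<notin> F y\<close>] by simp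
  qed (rule k)
  from poly1_zero[OF Y this l] show ?thesis .
qed

lemma bin_nat[simp]: "bin (int a) (int b) = of_nat (a choose b)"
  by (simp add: bin_def)

lemma bin_neg2: "b < 0 \<Longrightarrow> bin a b = 0" by (simp add: bin_def)

lemma powi_nat: assumes "k \<le> j" shows "(x::complex) powi (int j - int k) = x ^ (j - k)"
proof -
  have "int j - int k = int (j-k)" using assms by simp
  thus ?thesis by (simp only: power_int_of_nat)
qed

lemma m1_powi: "(-1::complex) powi (int j) = (-1)^j"
  by (simp add: power_int_of_nat)

lemma Kra_term: assumes "l < j"
  shows "(-1) powi (int j - int l) * bin (int j - int l - 1) (int k - int l) * g powi (int j - int k - 1)
   = (-1::complex)^(j-l) * (if l \<le> k \<and> k < j then of_nat((j-l-1) choose (k-l)) * g^(j-k-1) else 0)"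
proof (cases "l \<le> k")
  case True
  have e1: "int j - int l - 1 = int (j-l-1)" "int k - int l = int (k-l)" using assms True by auto
  show ?thesis
  proof (cases "k < j")
    case True
    have e3: "int j - int k - 1 = int (j-k-1)" using True by auto
    show ?thesis using True \<open>l \<le> k\<close> assms
      by (simp only: e1 e3 bin_nat power_int_of_nat powi_nat[OF less_imp_le[OF assms]]) simp
  next
    case False
    then show ?thesis using \<open>l \<le> k\<close> assms by (simp only: e1 bin_nat) (simp, arith)
  qed
next
  case False
  then show ?thesis by (simp add: bin_neg2)
qed

lemma Kra_nat: "Kra \<nu> g j k = (-1)^j * of_nat (j choose k) * g^(j-k)
   + 2*\<nu>*(\<Sum>l<j. (-1::complex)^(j-l) * (if l \<le> k \<and> k < j then of_nat((j-l-1) choose (k-l)) * g^(j-k-1) else 0))"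
proof -
  have s: "(\<Sum>l\<in>{0..<int j}. f l) = (\<Sum>l<j. f (int l))" for f :: "int \<Rightarrow> complex"
  proof -
    have "{0..<int j} = int ` {..<j}"
    proof (auto simp: image_iff)
      fix x assume "0 \<le> x" "x < int j"
      thus "\<exists>xa\<in>{..<j}. x = int xa" by (intro bexI[of _ "nat x"]) auto
    qed
    thus ?thesis by (simp add: sum.reindex)
  qed
  have t1: "(-1) powi int j * bin (int j) (int k) * g powi (int j - int k) = (-1)^j * of_nat (j choose k) * g^(j-k)"
    by (cases "k \<le> j") (simp_all add: powi_nat m1_powi)
  have s2: "(\<Sum>l<j. (-1) powi (int j - int l) * bin (int j - int l - 1) (int k - int l) * g powi (int j - int k - 1))
     = (\<Sum>l<j. (-1::complex)^(j-l) * (if l \<le> k \<and> k < j then of_nat((j-l-1) choose (k-l)) * g^(j-k-1) else 0))"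
    by (rule sum.cong[OF refl], rule Kra_term) simp
  show ?thesis unfolding Kra_def Let_def s t1 s2 ..
qed

lemma sum_trunc: fixes N j :: nat and f :: "nat \<Rightarrow> 'a::comm_monoid_add" assumes "j < N" "\<And>k. j < k \<Longrightarrow> f k = 0"
  shows "(\<Sum>k<N. f k) = (\<Sum>k\<le>j. f k)"
proof (rule sum.mono_neutral_right)
  show "finite {..<N}" by simp
  show "{..j} \<subseteq> {..<N}" using assms(1) by auto
  show "\<forall>i\<in>{..<N} - {..j}. f i = 0" using assms(2) by auto
qed

lemma Kpart1: assumes "j < N"
  shows "(\<Sum>k<N. (-1)^j * of_nat (j choose k) * g^(j-k) * y^k) = (-1)^j * (y+g::complex)^j"
proof -
  have "(\<Sum>k<N. (-1)^j * of_nat (j choose k) * g^(j-k) * y^k) = (\<Sum>k\<le>j. (-1)^j * of_nat (j choose k) * g^(j-k) * y^k)"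
    by (rule sum_trunc) (use assms in auto)
  also have "\<dots> = (-1)^j * (\<Sum>k\<le>j. of_nat (j choose k) * y^k * g^(j-k))"
    by (simp add: sum_distrib_left mult_ac)
  also have "\<dots> = (-1)^j * (y+g)^j" by (simp add: binomial_ring)
  finally show ?thesis .
qed

lemma Kinner: assumes "l < j" "j \<le> N"
  shows "(\<Sum>k<N. (if l \<le> k \<and> k < j then of_nat((j-l-1) choose (k-l)) * g^(j-k-1) else 0) * y^k)
    = y^l * (y+g::complex)^(j-l-1)"
proof -
  define n where "n = j - l - 1"
  have "(\<Sum>k<N. (if l \<le> k \<and> k < j then of_nat((j-l-1) choose (k-l)) * g^(j-k-1) else 0) * y^k)
     = (\<Sum>k\<in>{l..<j}. of_nat((j-l-1) choose (k-l)) * g^(j-k-1) * y^k)"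
    by (rule sum.mono_neutral_cong_right) (use assms in auto)
  also have "\<dots> = (\<Sum>t\<in>{0..<j-l}. of_nat((j-l-1) choose t) * g^(j-l-1-t) * y^(t+l))"
  proof -
    have "{l..<j} = {0+l..<(j-l)+l}" using assms by auto
    hence "(\<Sum>k\<in>{l..<j}. of_nat((j-l-1) choose (k-l)) * g^(j-k-1) * y^k)
       = (\<Sum>t\<in>{0..<j-l}. of_nat((j-l-1) choose (t+l-l)) * g^(j-(t+l)-1) * y^(t+l))"
      by (simp only: sum.shift_bounds_nat_ivl)
    thus ?thesis by (simp add: algebra_simps)
  qed
  also have "\<dots> = y^l * (\<Sum>t\<le>n. of_nat(n choose t) * y^t * g^(n-t))"
  proof -
    have "{0..<j-l} = {..n}" using assms by (auto simp: n_def)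
    thus ?thesis by (simp add: sum_distrib_left n_def power_add mult_ac)
  qed
  also have "\<dots> = y^l * (y+g)^n" by (simp add: binomial_ring)
  finally show ?thesis by (simp add: n_def)
qed

lemma Kgeo: assumes "2*y+g \<noteq> 0"
  shows "(\<Sum>l<j. (-1)^(j-l) * (y^l * (y+g::complex)^(j-l-1))) = - (y^j - (-y-g)^j)/(2*y+g)"
proof -
  have "y^j - (-y-g)^j = (y - (-y-g)) * (\<Sum>i<j. (-y-g)^(j - Suc i) * y^i)"
    by (rule power_diff_sumr2)
  moreover have "(\<Sum>l<j. (-1)^(j-l) * (y^l * (y+g::complex)^(j-l-1))) = - (\<Sum>i<j. (-y-g)^(j - Suc i) * y^i)"
  proof -
    have "(-1)^(j-l) * (y^l * (y+g::complex)^(j-l-1)) = - ((-y-g)^(j - Suc l) * y^l)" if "l < j" for l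
    proof -
      have "j - l = Suc (j - Suc l)" using that by auto
      moreover have "(-y-g)^(j - Suc l) = (-1)^(j - Suc l) * (y+g)^(j - Suc l)"
        by (metis minus_diff_eq minus_diff_commute mult_minus1 power_mult_distrib diff_minus_eq_add minus_add_distrib) 
      ultimately show ?thesis by simp
    qed
    hence "(\<Sum>l<j. (-1)^(j-l) * (y^l * (y+g::complex)^(j-l-1))) = (\<Sum>i<j. - ((-y-g)^(j - Suc i) * y^i))"
      by (intro sum.cong) auto
    thus ?thesis by (simp add: sum_negf)
  qed
  moreover have "y - (-y-g) = 2*y+g" by simp
  ultimately show ?thesis using assms by (simp add: field_simps)
qed

lemma Kpoly: assumes "j < N" "2*y+g \<noteq> 0"
  shows "(\<Sum>k<N. Kra \<nu> g j k * y^k) = (-y-g)^j - 2*\<nu>*(y^j - (-y-g)^j)/(2*y+g)"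
proof -
  have "(\<Sum>k<N. Kra \<nu> g j k * y^k) = (\<Sum>k<N. (-1)^j * of_nat (j choose k) * g^(j-k) * y^k)
     + 2*\<nu>*(\<Sum>l<j. (-1)^(j-l) * (\<Sum>k<N. (if l \<le> k \<and> k < j then of_nat((j-l-1) choose (k-l)) * g^(j-k-1) else 0) * y^k))"
  proof -
    have "(\<Sum>k<N. Kra \<nu> g j k * y^k) = (\<Sum>k<N. (-1)^j * of_nat (j choose k) * g^(j-k) * y^k)
       + 2*\<nu>*(\<Sum>k<N. \<Sum>l<j. (-1)^(j-l) * ((if l \<le> k \<and> k < j then of_nat((j-l-1) choose (k-l)) * g^(j-k-1) else 0) * y^k))"
      by (simp add: Kra_nat distrib_right sum.distrib sum_distrib_left sum_distrib_right mult.assoc)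
    also have "(\<Sum>k<N. \<Sum>l<j. (-1)^(j-l) * ((if l \<le> k \<and> k < j then of_nat((j-l-1) choose (k-l)) * g^(j-k-1) else 0) * y^k))
      = (\<Sum>l<j. (-1)^(j-l) * (\<Sum>k<N. (if l \<le> k \<and> k < j then of_nat((j-l-1) choose (k-l)) * g^(j-k-1) else 0) * y^k))"
      by (subst sum.swap) (simp add: sum_distrib_left)
    finally show ?thesis .
  qed
  also have "\<dots> = (-1)^j * (y+g)^j + 2*\<nu>*(\<Sum>l<j. (-1)^(j-l) * (y^l * (y+g::complex)^(j-l-1)))"
    using assms by (simp add: Kpart1 Kinner)
  also have "\<dots> = (-y-g)^j - 2*\<nu>*(y^j - (-y-g)^j)/(2*y+g)"
  proof -
    have e: "(-1)^j * (y+g)^j = (-y-g)^j"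
      by (metis minus_diff_eq minus_diff_commute mult_minus1 power_mult_distrib diff_minus_eq_add minus_add_distrib) 
    show ?thesis unfolding Kgeo[OF assms(2), of j] e using assms(2) by (simp add: field_simps)
  qed
  finally show ?thesis .
qed

definition epsn :: "nat \<Rightarrow> nat \<Rightarrow> nat \<Rightarrow> complex" where
  "epsn j m k = (if j \<le> k \<and> k < m then 1 else if m \<le> k \<and> k < j then -1 else 0)"

lemma eps_nat: "eps (int j) (int m) (int k) = epsn j m k" by (simp add: eps_def epsn_def)

lemma RtermA: "(-1) powi (int j - int l) * h powi (int i + int j - int k - int l) * (bin (int i) (int k) * bin (int j) (int l))
  = (if k \<le> i \<and> l \<le> j then of_nat (i choose k) * of_nat (j choose l) * h^(i-k) * (-h)^(j-l) else (0::complex))"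
proof (cases "k \<le> i \<and> l \<le> j")
  case True
  have e1: "int j - int l = int (j-l)" using True by simp
  have e2: "int i + int j - int k - int l = int ((i-k)+(j-l))" using True by simp
  have "(-1) powi (int j - int l) * h powi (int i + int j - int k - int l) * (bin (int i) (int k) * bin (int j) (int l))
    = (-1)^(j-l) * h^((i-k)+(j-l)) * (of_nat (i choose k) * of_nat (j choose l))"
    by (simp only: e1 e2 power_int_of_nat bin_nat)
  also have "\<dots> = of_nat (i choose k) * of_nat (j choose l) * h^(i-k) * (-h)^(j-l)"
    by (simp only: power_add power_minus[of h] mult_ac)
  finally show ?thesis using True by simp
next
  case False
  hence "bin (int i) (int k) * bin (int j) (int l) = 0" by (auto simp: binomial_eq_0)
  thus ?thesis by (simp only: mult_zero_right if_not_P[OF False])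
qed

lemma RtermB: assumes "h \<noteq> 0"
  shows "(-1) powi (int j - int l) * h powi (int i + int j - int k - int l) * (\<kappa> / h * ((-1) powi (int m - int k) * bin (int i) (int m) * bin (int j + int m - int k - 1) (int l) * eps (int j) (int m) (int k)))
   = - \<kappa> * (epsn j m k * of_nat (i choose m) * h^(i-m) * (of_nat ((j+m-k-1) choose l) * (-h)^(j+m-k-1-l)))"
proof (cases "epsn j m k = 0")
  case True thus ?thesis by (simp add: eps_nat)
next
  case False
  hence km: "k < j \<or> k < m" by (auto simp: epsn_def split: if_splits)
  define n where "n = j + m - k - 1"
  have en: "int j + int m - int k - 1 = int n" using km by (auto simp: n_def)
  show ?thesis
  proof (cases "l \<le> n \<and> m \<le> i")
    case True
    have e1: "(-1::complex) powi (int j - int l) * (-1) powi (int m - int k) = - ((-1)^(n-l))"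
    proof -
      have ex: "(int j - int l) + (int m - int k) = int (Suc (n - l))" using True km by (auto simp: n_def)
      have "(-1::complex) powi (int j - int l) * (-1) powi (int m - int k) = (-1) powi ((int j - int l) + (int m - int k))"
        by (simp add: power_int_add)
      also have "\<dots> = (-1)^(Suc (n-l))" by (simp only: ex power_int_of_nat)
      finally show ?thesis by simp
    qed
    have e2: "h powi (int i + int j - int k - int l) / h = h^(n-l) * h^(i-m)"
    proof -
      have "int i + int j - int k - int l = int ((n-l)+(i-m)) + 1" using True km by (auto simp: n_def)
      hence "h powi (int i + int j - int k - int l) = h^((n-l)+(i-m)) * h" using assms
        by (simp add: power_int_add power_int_of_nat power_add)
      thus ?thesis using assms by (simp add: power_add)
    qed
    have "(-1) powi (int j - int l) * h powi (int i + int j - int k - int l) * (\<kappa> / h * ((-1) powi (int m - int k) * bin (int i) (int m) * bin (int j + int m - int k - 1) (int l) * eps (int j) (int m) (int k)))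
      = \<kappa> * ((-1) powi (int j - int l) * (-1) powi (int m - int k)) * (h powi (int i + int j - int k - int l) / h) * bin (int i) (int m) * bin (int n) (int l) * epsn j m k"
      by (simp add: en eps_nat)
    also have "\<dots> = \<kappa> * (- ((-1)^(n-l))) * (h^(n-l) * h^(i-m)) * of_nat (i choose m) * of_nat (n choose l) * epsn j m k"
      by (simp only: e1 e2 bin_nat)
    also have "\<dots> = - \<kappa> * (epsn j m k * of_nat (i choose m) * h^(i-m) * (of_nat (n choose l) * (-h)^(n-l)))"
      by (simp only: power_minus[of h] mult_ac mult_minus_left mult_minus_right)
    finally show ?thesis by (simp add: n_def)
  next
    case False
    hence "i < m \<or> n < l" by auto
    thus ?thesis
    proof
      assume "i < m" thus ?thesis by (simp add: binomial_eq_0)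
    next
      assume nl: "n < l"
      have "bin (int j + int m - int k - 1) (int l) = 0" unfolding en using nl by (simp add: binomial_eq_0)
      moreover have "((j+m-k-1) choose l) = 0" using nl by (simp add: n_def binomial_eq_0)
      ultimately show ?thesis by simp
    qed
  qed
qed

lemma sum_int_nat: "(\<Sum>m\<in>{0..int i}. f m) = (\<Sum>m\<le>i. f (int m))"
proof -
  have "{0..int i} = int ` {..i}"
  proof (auto simp: image_iff)
    fix x assume "0 \<le> x" "x \<le> int i"
    thus "\<exists>xa\<in>{..i}. x = int xa" by (intro bexI[of _ "nat x"]) auto
  qed
  thus ?thesis by (simp add: sum.reindex)
qed

lemma Rra_nat: assumes "h \<noteq> 0"
  shows "Rra \<kappa> h (i,j) (k,l) = (if k \<le> i \<and> l \<le> j then of_nat (i choose k) * of_nat (j choose l) * h^(i-k) * (-h)^(j-l) else 0)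
     + \<kappa> * (\<Sum>m\<le>i. epsn j m k * of_nat (i choose m) * h^(i-m) * (of_nat ((j+m-k-1) choose l) * (-h)^(j+m-k-1-l)))"
proof -
  define P where "P = (-1) powi (int j - int l) * h powi (int i + int j - int k - int l)"
  define T where "T = (\<lambda>m::int. (-1) powi (m - int k) * bin (int i) m * bin (int j + m - int k - 1) (int l) * eps (int j) m (int k))"
  have "Rra \<kappa> h (i,j) (k,l) = P * (bin (int i) (int k) * bin (int j) (int l) - \<kappa> / h * (\<Sum>m\<le>i. T (int m)))"
    unfolding Rra_def Let_def P_def T_def prod.case sum_int_nat ..
  also have "\<dots> = P * (bin (int i) (int k) * bin (int j) (int l)) - (\<Sum>m\<le>i. P * (\<kappa> / h * T (int m)))"
    by (simp add: right_diff_distrib sum_distrib_left)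
  also have "\<dots> = (if k \<le> i \<and> l \<le> j then of_nat (i choose k) * of_nat (j choose l) * h^(i-k) * (-h)^(j-l) else 0)
     - (\<Sum>m\<le>i. - \<kappa> * (epsn j m k * of_nat (i choose m) * h^(i-m) * (of_nat ((j+m-k-1) choose l) * (-h)^(j+m-k-1-l))))"
    unfolding P_def T_def RtermA RtermB[OF assms] ..
  also have "\<dots> = (if k \<le> i \<and> l \<le> j then of_nat (i choose k) * of_nat (j choose l) * h^(i-k) * (-h)^(j-l) else 0)
     + \<kappa> * (\<Sum>m\<le>i. epsn j m k * of_nat (i choose m) * h^(i-m) * (of_nat ((j+m-k-1) choose l) * (-h)^(j+m-k-1-l)))"
    by (simp add: sum_negf sum_distrib_left)
  finally show ?thesis .
qed

lemma epsn_bound: "epsn j m k \<noteq> 0 \<Longrightarrow> m \<le> i \<Longrightarrow> i < N \<Longrightarrow> j < N \<Longrightarrow> j+m-k-1 < N"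
  by (auto simp: epsn_def split: if_splits)

lemma linner: assumes "m \<le> i" "i < N" "j < N"
  shows "epsn j m k * (\<Sum>l<N. of_nat ((j+m-k-1) choose l) * (-h)^(j+m-k-1-l) * y^l) = epsn j m k * (y-h::complex)^(j+m-k-1)"
proof (cases "epsn j m k = 0")
  case False
  define n where "n = j+m-k-1"
  have nN: "n < N" using epsn_bound[OF False assms] by (simp add: n_def)
  have "(\<Sum>l<N. of_nat (n choose l) * (-h)^(n-l) * y^l) = (\<Sum>l\<le>n. of_nat (n choose l) * (-h)^(n-l) * y^l)"
    by (rule sum_trunc[OF nN]) simp
  also have "\<dots> = (y + (-h))^n" by (subst binomial_ring) (simp add: mult_ac)
  finally show ?thesis by (simp add: n_def)
qed simp

lemma epsgeo: assumes "j \<le> N" "m \<le> N" "x \<noteq> v"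
  shows "(\<Sum>k<N. epsn j m k * (x^k * v^(j+m-k-1))) = (x^m*v^j - x^j*v^m)/(x-(v::complex))"
proof (cases "j \<le> m")
  case True
  define d where "d = m - j"
  have "(\<Sum>k<N. epsn j m k * (x^k * v^(j+m-k-1))) = (\<Sum>k\<in>{j..<m}. x^k * v^(j+m-k-1))"
    by (rule sum.mono_neutral_cong_right) (use assms True in \<open>auto simp: epsn_def\<close>)
  also have "\<dots> = (\<Sum>t\<in>{0..<d}. x^(t+j) * v^(j+m-(t+j)-1))"
  proof -
    have "{j..<m} = {0+j..<d+j}" using True by (auto simp: d_def)
    thus ?thesis by (simp only: sum.shift_bounds_nat_ivl)
  qed
  also have "\<dots> = x^j * v^j * (\<Sum>t<d. v^(d - Suc t) * x^t)"
  proof -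
    have "x^(t+j) * v^(j+m-(t+j)-1) = x^j * v^j * (v^(d - Suc t) * x^t)" if "t < d" for t
    proof -
      have "j+m-(t+j)-1 = j + (d - Suc t)" using that True by (auto simp: d_def)
      thus ?thesis by (simp add: power_add mult_ac)
    qed
    thus ?thesis by (simp add: sum_distrib_left atLeast0LessThan)
  qed
  also have "\<dots> = x^j * v^j * ((x^d - v^d)/(x-v))"
    using power_diff_sumr2[of x d v] assms(3) by simp
  also have "\<dots> = (x^m*v^j - x^j*v^m)/(x-v)"
  proof -
    have "m = j + d" using True by (simp add: d_def)
    thus ?thesis by (simp add: power_add algebra_simps diff_divide_distrib)
  qed
  finally show ?thesis .
next
  case False
  define d where "d = j - m"
  have "(\<Sum>k<N. epsn j m k * (x^k * v^(j+m-k-1))) = (\<Sum>k\<in>{m..<j}. - (x^k * v^(j+m-k-1)))"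
    by (rule sum.mono_neutral_cong_right) (use assms False in \<open>auto simp: epsn_def\<close>)
  also have "\<dots> = (\<Sum>t\<in>{0..<d}. - (x^(t+m) * v^(j+m-(t+m)-1)))"
  proof -
    have "{m..<j} = {0+m..<d+m}" using False by (auto simp: d_def)
    thus ?thesis by (simp only: sum.shift_bounds_nat_ivl)
  qed
  also have "\<dots> = - (x^m * v^m * (\<Sum>t<d. v^(d - Suc t) * x^t))"
  proof -
    have "- (x^(t+m) * v^(j+m-(t+m)-1)) = - (x^m * v^m * (v^(d - Suc t) * x^t))" if "t < d" for t
    proof -
      have "j+m-(t+m)-1 = m + (d - Suc t)" using that False by (auto simp: d_def)
      thus ?thesis by (simp add: power_add mult_ac)
    qed
    thus ?thesis by (simp add: sum_distrib_left atLeast0LessThan sum_negf)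
  qed
  also have "\<dots> = - (x^m * v^m * ((x^d - v^d)/(x-v)))"
    using power_diff_sumr2[of x d v] assms(3) by simp
  also have "\<dots> = (x^m*v^j - x^j*v^m)/(x-v)"
  proof -
    have "j = m + d" using False by (simp add: d_def)
    thus ?thesis by (simp add: power_add algebra_simps diff_divide_distrib)
  qed
  finally show ?thesis .
qed

lemma if_trunc: fixes N i :: nat assumes "i < N"
  shows "(\<Sum>k<N. (if k \<le> i then f k else 0)) = (\<Sum>k\<le>i. f k)"
proof -
  have "(\<Sum>k<N. (if k \<le> i then f k else 0)) = (\<Sum>k\<le>i. (if k \<le> i then f k else 0))"
    by (rule sum_trunc[OF assms]) simp
  also have "\<dots> = (\<Sum>k\<le>i. f k)" by (rule sum.cong) auto
  finally show ?thesis .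
qed

lemma Rpoly: assumes iN: "i < N" and jN: "j < N" and h: "h \<noteq> 0" and xy: "x - y + h \<noteq> 0"
  shows "(\<Sum>k<N. \<Sum>l<N. Rra \<kappa> h (i,j) (k,l) * x^k * y^l)
     = (x+h)^i*(y-h)^j + \<kappa>*((x+h)^i*(y-h)^j - y^i*x^j)/(x-y+h)"
proof -
  define A where "A = (\<lambda>k l. (if k \<le> i \<and> l \<le> j then of_nat (i choose k) * of_nat (j choose l) * h^(i-k) * (-h)^(j-l) else 0::complex))"
  define X where "X = (\<lambda>m k l. epsn j m k * of_nat (i choose m) * h^(i-m) * (of_nat ((j+m-k-1) choose l) * (-h)^(j+m-k-1-l)))"
  define v where "v = y - h"
  have R': "Rra \<kappa> h (i,j) (k,l) = A k l + \<kappa> * (\<Sum>m\<le>i. X m k l)" for k l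
    unfolding A_def X_def by (rule Rra_nat[OF h])
  have "(\<Sum>k<N. \<Sum>l<N. Rra \<kappa> h (i,j) (k,l) * x^k * y^l)
     = (\<Sum>k<N. \<Sum>l<N. A k l * x^k * y^l + \<kappa> * ((\<Sum>m\<le>i. X m k l) * x^k * y^l))"
    unfolding R' by (simp only: distrib_right mult.assoc)
  also have "\<dots> = (\<Sum>k<N. \<Sum>l<N. A k l * x^k * y^l) + \<kappa> * (\<Sum>k<N. \<Sum>l<N. (\<Sum>m\<le>i. X m k l) * x^k * y^l)"
    by (simp only: sum.distrib sum_distrib_left)
  also have "(\<Sum>k<N. \<Sum>l<N. A k l * x^k * y^l) = (x+h)^i * (y-h)^j"
  proof -
    have "(\<Sum>k<N. \<Sum>l<N. A k l * x^k * y^l)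
      = (\<Sum>k<N. \<Sum>l<N. (if k \<le> i then of_nat (i choose k) * x^k * h^(i-k) else 0) * (if l \<le> j then of_nat (j choose l) * y^l * (-h)^(j-l) else 0))"
      by (rule sum.cong[OF refl], rule sum.cong[OF refl]) (simp add: A_def mult_ac)
    also have "\<dots> = (\<Sum>k<N. (if k \<le> i then of_nat (i choose k) * x^k * h^(i-k) else 0)) * (\<Sum>l<N. (if l \<le> j then of_nat (j choose l) * y^l * (-h)^(j-l) else 0))"
      by (rule sum_product[symmetric])
    also have "\<dots> = (\<Sum>k\<le>i. of_nat (i choose k) * x^k * h^(i-k)) * (\<Sum>l\<le>j. of_nat (j choose l) * y^l * (-h)^(j-l))"
      by (simp only: if_trunc[OF iN] if_trunc[OF jN])
    also have "\<dots> = (x+h)^i * (y + -h)^j" by (simp only: binomial_ring)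
    finally show ?thesis by simp
  qed
  also have "(\<Sum>k<N. \<Sum>l<N. (\<Sum>m\<le>i. X m k l) * x^k * y^l)
     = (\<Sum>m\<le>i. of_nat (i choose m) * h^(i-m) * (\<Sum>k<N. epsn j m k * (x^k * v^(j+m-k-1))))"
  proof -
    have "(\<Sum>k<N. \<Sum>l<N. (\<Sum>m\<le>i. X m k l) * x^k * y^l) = (\<Sum>k<N. \<Sum>m\<le>i. \<Sum>l<N. X m k l * x^k * y^l)"
    proof (rule sum.cong[OF refl])
      fix k
      have "(\<Sum>l<N. (\<Sum>m\<le>i. X m k l) * x^k * y^l) = (\<Sum>l<N. \<Sum>m\<le>i. X m k l * x^k * y^l)"
        by (simp only: sum_distrib_right)
      also have "\<dots> = (\<Sum>m\<le>i. \<Sum>l<N. X m k l * x^k * y^l)" by (rule sum.swap)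
      finally show "(\<Sum>l<N. (\<Sum>m\<le>i. X m k l) * x^k * y^l) = (\<Sum>m\<le>i. \<Sum>l<N. X m k l * x^k * y^l)" .
    qed
    also have "\<dots> = (\<Sum>m\<le>i. \<Sum>k<N. \<Sum>l<N. X m k l * x^k * y^l)" by (rule sum.swap)
    also have "\<dots> = (\<Sum>m\<le>i. of_nat (i choose m) * h^(i-m) * (\<Sum>k<N. epsn j m k * (x^k * v^(j+m-k-1))))"
    proof (rule sum.cong[OF refl])
      fix m assume "m \<in> {..i}"
      hence mi: "m \<le> i" by simp
      have "(\<Sum>k<N. \<Sum>l<N. X m k l * x^k * y^l) = (\<Sum>k<N. of_nat (i choose m) * h^(i-m) * (epsn j m k * (x^k * v^(j+m-k-1))))"
      proof (rule sum.cong[OF refl])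
        fix k
        have "(\<Sum>l<N. X m k l * x^k * y^l) = of_nat (i choose m) * h^(i-m) * x^k * (epsn j m k * (\<Sum>l<N. of_nat ((j+m-k-1) choose l) * (-h)^(j+m-k-1-l) * y^l))"
          by (simp add: X_def sum_distrib_left mult_ac)
        also have "\<dots> = of_nat (i choose m) * h^(i-m) * (epsn j m k * (x^k * v^(j+m-k-1)))"
          unfolding linner[OF mi iN jN] v_def by (simp only: mult_ac)
        finally show "(\<Sum>l<N. X m k l * x^k * y^l) = of_nat (i choose m) * h^(i-m) * (epsn j m k * (x^k * v^(j+m-k-1)))" .
      qed
      also have "\<dots> = of_nat (i choose m) * h^(i-m) * (\<Sum>k<N. epsn j m k * (x^k * v^(j+m-k-1)))"
        by (simp only: sum_distrib_left)
      finally show "(\<Sum>k<N. \<Sum>l<N. X m k l * x^k * y^l) = of_nat (i choose m) * h^(i-m) * (\<Sum>k<N. epsn j m k * (x^k * v^(j+m-k-1)))" .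
    qed
    finally show ?thesis .
  qed
  also have "(\<Sum>m\<le>i. of_nat (i choose m) * h^(i-m) * (\<Sum>k<N. epsn j m k * (x^k * v^(j+m-k-1))))
     = (\<Sum>m\<le>i. of_nat (i choose m) * h^(i-m) * ((x^m*v^j - x^j*v^m)/(x-v)))"
  proof (rule sum.cong[OF refl])
    fix m assume "m \<in> {..i}"
    hence "m \<le> N" using iN by simp
    moreover have "x \<noteq> v" using xy by (auto simp: v_def)
    ultimately show "of_nat (i choose m) * h^(i-m) * (\<Sum>k<N. epsn j m k * (x^k * v^(j+m-k-1))) = of_nat (i choose m) * h^(i-m) * ((x^m*v^j - x^j*v^m)/(x-v))"
      using epsgeo[of j N m x v] jN by (simp only: less_imp_le[OF jN] simp_thms)
  qed
  also have "\<dots> = ((x+h)^i * v^j - x^j * (v+h)^i)/(x-v)"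
  proof -
    have "(\<Sum>m\<le>i. of_nat (i choose m) * h^(i-m) * ((x^m*v^j - x^j*v^m)/(x-v)))
      = ((\<Sum>m\<le>i. of_nat (i choose m) * x^m * h^(i-m)) * v^j - x^j * (\<Sum>m\<le>i. of_nat (i choose m) * v^m * h^(i-m)))/(x-v)"
    proof -
      have "(\<Sum>m\<le>i. of_nat (i choose m) * h^(i-m) * ((x^m*v^j - x^j*v^m)/(x-v)))
         = (\<Sum>m\<le>i. of_nat (i choose m) * x^m * h^(i-m) * v^j - x^j * (of_nat (i choose m) * v^m * h^(i-m)))/(x-v)"
        unfolding sum_divide_distrib by (rule sum.cong[OF refl]) (simp add: algebra_simps diff_divide_distrib)
      also have "(\<Sum>m\<le>i. of_nat (i choose m) * x^m * h^(i-m) * v^j - x^j * (of_nat (i choose m) * v^m * h^(i-m)))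
         = (\<Sum>m\<le>i. of_nat (i choose m) * x^m * h^(i-m)) * v^j - x^j * (\<Sum>m\<le>i. of_nat (i choose m) * v^m * h^(i-m))"
        by (simp only: sum_subtractf sum_distrib_left sum_distrib_right)
      finally show ?thesis .
    qed
    thus ?thesis by (simp only: binomial_ring)
  qed
  finally have fin: "(\<Sum>k<N. \<Sum>l<N. Rra \<kappa> h (i,j) (k,l) * x^k * y^l) = (x+h)^i * (y-h)^j + \<kappa> * (((x+h)^i * v^j - x^j * (v+h)^i)/(x-v))" .
  have e: "x - (y - h) = x - y + h" "x^j*y^i = y^i*x^j" by (simp_all add: algebra_simps)
  show ?thesis unfolding fin v_def by (simp add: e)
qed

definition opK1 :: "complex \<Rightarrow> complex \<Rightarrow> (complex \<Rightarrow> complex) \<Rightarrow> complex \<Rightarrow> complex" where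
  "opK1 \<nu> g f y = f (-y-g) - 2*\<nu>*(f y - f (-y-g))/(2*y+g)"

lemma opK1_invol: assumes "2*y+g \<noteq> 0" shows "opK1 \<nu> g (opK1 \<nu> g f) y = f y"
proof -
  define D where "D = 2*y+g"
  have a: "2*(-y-g)+g = -D" by (simp add: D_def algebra_simps)
  have b: "-(-y-g)-g = y" by simp
  have D: "D \<noteq> 0" using assms by (simp add: D_def)
  have "opK1 \<nu> g (opK1 \<nu> g f) y = (f y - 2*\<nu>*(f (-y-g) - f y)/(-D)) - 2*\<nu>*((f (-y-g) - 2*\<nu>*(f y - f (-y-g))/D) - (f y - 2*\<nu>*(f (-y-g) - f y)/(-D)))/D"
    unfolding opK1_def a b D_def[symmetric] ..
  also have "\<dots> = f y" using D by (simp add: field_simps)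
  finally show ?thesis .
qed

definition opR :: "complex \<Rightarrow> complex \<Rightarrow> (complex \<Rightarrow> complex \<Rightarrow> complex) \<Rightarrow> complex \<Rightarrow> complex \<Rightarrow> complex" where
  "opR \<kappa> h f x y = f (y - h) (x + h) + \<kappa> * (f (y - h) (x + h) - f x y) / (x - y + h)"

definition opK :: "complex \<Rightarrow> complex \<Rightarrow> (complex \<Rightarrow> complex \<Rightarrow> complex) \<Rightarrow> complex \<Rightarrow> complex \<Rightarrow> complex" where
  "opK \<nu> g f x y = f x (- y - g) - 2 * \<nu> * (f x y - f x (- y - g)) / (2 * y + g)"

definition wR :: "complex \<Rightarrow> complex \<Rightarrow> complex" where "wR \<kappa> D = 1 + \<kappa> / D"
definition zR :: "complex \<Rightarrow> complex \<Rightarrow> complex" where "zR \<kappa> D = - (\<kappa> / D)"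
definition wK :: "complex \<Rightarrow> complex \<Rightarrow> complex" where "wK \<nu> D = 1 + 2 * \<nu> / D"
definition zK :: "complex \<Rightarrow> complex \<Rightarrow> complex" where "zK \<nu> D = - (2 * \<nu> / D)"

lemma opR_alt: "opR \<kappa> h f x y = wR \<kappa> (x - y + h) * f (y - h) (x + h) + zR \<kappa> (x - y + h) * f x y"
  unfolding opR_def wR_def zR_def by (simp add: algebra_simps diff_divide_distrib add_divide_distrib)

lemma opK_alt: "opK \<nu> g f x y = wK \<nu> (2 * y + g) * f x (- y - g) + zK \<nu> (2 * y + g) * f x y"
  unfolding opK_def wK_def zK_def by (simp add: algebra_simps diff_divide_distrib add_divide_distrib)

lemma refl_abstract:
  fixes f :: "complex \<Rightarrow> complex \<Rightarrow> complex"
  assumes c1: "x - y + h \<noteq> 0" and c2: "x + y + g + h \<noteq> 0" and c3: "2*x + g + 2*h \<noteq> 0" and c4: "2*y + g \<noteq> 0"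
  shows "opR \<kappa> h (opK \<nu> g (opR \<kappa> h (opK \<nu> g f))) x y = opK \<nu> g (opR \<kappa> h (opK \<nu> g (opR \<kappa> h f))) x y"
proof -
  define a where "a = x - y + h"
  define b where "b = x + y + g + h"
  define c where "c = a + b"
  define d where "d = b - a"
  have cd: "c = a + b" "d = b - a" by (simp_all add: c_def d_def)
  have a0: "a \<noteq> 0" using c1 by (simp add: a_def)
  have b0: "b \<noteq> 0" using c2 by (simp add: b_def)
  have c0: "c \<noteq> 0" using c3 by (simp add: a_def b_def c_def algebra_simps)
  have d0: "d \<noteq> 0" using c4 by (simp add: a_def b_def d_def algebra_simps)
  define F1 where "F1 = opK \<nu> g f"
  define F2 where "F2 = opR \<kappa> h F1"
  define F3 where "F3 = opK \<nu> g F2"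
  define F4 where "F4 = opR \<kappa> h F3"
  define G1 where "G1 = opR \<kappa> h f"
  define G2 where "G2 = opK \<nu> g G1"
  define G3 where "G3 = opR \<kappa> h G2"
  define G4 where "G4 = opK \<nu> g G3"
  have e0: "x - y + h = a" by (simp add: a_def b_def c_def d_def algebra_simps)
  have e1: "- (x + h) - g = - x - h - g" by (simp add: a_def b_def c_def d_def algebra_simps)
  have e2: "2 * (x + h) + g = c" by (simp add: a_def b_def c_def d_def algebra_simps)
  have e3: "- x - h - g - h = - x - 2 * h - g" by (simp add: a_def b_def c_def d_def algebra_simps)
  have e4: "y - h + h = y" by (simp add: a_def b_def c_def d_def algebra_simps)
  have e5: "y - h - (- x - h - g) + h = b" by (simp add: a_def b_def c_def d_def algebra_simps)
  have e6: "2 * y + g = d" by (simp add: a_def b_def c_def d_def algebra_simps)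
  have e7: "- (- x - h - g) - g = x + h" by (simp add: a_def b_def c_def d_def algebra_simps)
  have e8: "2 * (- x - h - g) + g = - c" by (simp add: a_def b_def c_def d_def algebra_simps)
  have e9: "x + h - h = x" by (simp add: a_def b_def c_def d_def algebra_simps)
  have e10: "y - h - (x + h) + h = - a" by (simp add: a_def b_def c_def d_def algebra_simps)
  have e11: "- y - g - h = - y - h - g" by (simp add: a_def b_def c_def d_def algebra_simps)
  have e12: "x - (- y - g) + h = b" by (simp add: a_def b_def c_def d_def algebra_simps)
  have e13: "- (- y - g) - g = y" by (simp add: a_def b_def c_def d_def algebra_simps)
  have e14: "2 * (- y - g) + g = - d" by (simp add: a_def b_def c_def d_def algebra_simps)
  have e15: "- y - h - g + h = - y - g" by (simp add: a_def b_def c_def d_def algebra_simps)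
  have e16: "- y - h - g - (- x - h - g) + h = a" by (simp add: a_def b_def c_def d_def algebra_simps)
  have e17: "- y - h - g - (x + h) + h = - b" by (simp add: a_def b_def c_def d_def algebra_simps)
  have F_0: "F4 (x) (y) = wR \<kappa> (a) * F3 (y - h) (x + h) + zR \<kappa> (a) * F3 (x) (y)"
    unfolding F4_def opR_alt by (simp only: e0)
  have F_1: "F3 (y - h) (x + h) = wK \<nu> (c) * F2 (y - h) (- x - h - g) + zK \<nu> (c) * F2 (y - h) (x + h)"
    unfolding F3_def opK_alt by (simp only: e1 e2)
  have F_2: "F2 (y - h) (- x - h - g) = wR \<kappa> (b) * F1 (- x - 2 * h - g) (y) + zR \<kappa> (b) * F1 (y - h) (- x - h - g)"
    unfolding F2_def opR_alt by (simp only: e3 e4 e5)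
  have F_3: "F1 (- x - 2 * h - g) (y) = wK \<nu> (d) * f (- x - 2 * h - g) (- y - g) + zK \<nu> (d) * f (- x - 2 * h - g) (y)"
    unfolding F1_def opK_alt by (simp only: e6)
  have F_4: "F1 (y - h) (- x - h - g) = wK \<nu> (- c) * f (y - h) (x + h) + zK \<nu> (- c) * f (y - h) (- x - h - g)"
    unfolding F1_def opK_alt by (simp only: e7 e8)
  have F_5: "F2 (y - h) (x + h) = wR \<kappa> (- a) * F1 (x) (y) + zR \<kappa> (- a) * F1 (y - h) (x + h)"
    unfolding F2_def opR_alt by (simp only: e9 e4 e10)
  have F_6: "F1 (x) (y) = wK \<nu> (d) * f (x) (- y - g) + zK \<nu> (d) * f (x) (y)"
    unfolding F1_def opK_alt by (simp only: e6)
  have F_7: "F1 (y - h) (x + h) = wK \<nu> (c) * f (y - h) (- x - h - g) + zK \<nu> (c) * f (y - h) (x + h)"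
    unfolding F1_def opK_alt by (simp only: e1 e2)
  have F_8: "F3 (x) (y) = wK \<nu> (d) * F2 (x) (- y - g) + zK \<nu> (d) * F2 (x) (y)"
    unfolding F3_def opK_alt by (simp only: e6)
  have F_9: "F2 (x) (- y - g) = wR \<kappa> (b) * F1 (- y - h - g) (x + h) + zR \<kappa> (b) * F1 (x) (- y - g)"
    unfolding F2_def opR_alt by (simp only: e11 e12)
  have F_10: "F1 (- y - h - g) (x + h) = wK \<nu> (c) * f (- y - h - g) (- x - h - g) + zK \<nu> (c) * f (- y - h - g) (x + h)"
    unfolding F1_def opK_alt by (simp only: e1 e2)
  have F_11: "F1 (x) (- y - g) = wK \<nu> (- d) * f (x) (y) + zK \<nu> (- d) * f (x) (- y - g)"
    unfolding F1_def opK_alt by (simp only: e13 e14)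
  have F_12: "F2 (x) (y) = wR \<kappa> (a) * F1 (y - h) (x + h) + zR \<kappa> (a) * F1 (x) (y)"
    unfolding F2_def opR_alt by (simp only: e0)
  have G_13: "G4 (x) (y) = wK \<nu> (d) * G3 (x) (- y - g) + zK \<nu> (d) * G3 (x) (y)"
    unfolding G4_def opK_alt by (simp only: e6)
  have G_14: "G3 (x) (- y - g) = wR \<kappa> (b) * G2 (- y - h - g) (x + h) + zR \<kappa> (b) * G2 (x) (- y - g)"
    unfolding G3_def opR_alt by (simp only: e11 e12)
  have G_15: "G2 (- y - h - g) (x + h) = wK \<nu> (c) * G1 (- y - h - g) (- x - h - g) + zK \<nu> (c) * G1 (- y - h - g) (x + h)"
    unfolding G2_def opK_alt by (simp only: e1 e2)
  have G_16: "G1 (- y - h - g) (- x - h - g) = wR \<kappa> (a) * f (- x - 2 * h - g) (- y - g) + zR \<kappa> (a) * f (- y - h - g) (- x - h - g)"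
    unfolding G1_def opR_alt by (simp only: e3 e15 e16)
  have G_17: "G1 (- y - h - g) (x + h) = wR \<kappa> (- b) * f (x) (- y - g) + zR \<kappa> (- b) * f (- y - h - g) (x + h)"
    unfolding G1_def opR_alt by (simp only: e9 e15 e17)
  have G_18: "G2 (x) (- y - g) = wK \<nu> (- d) * G1 (x) (y) + zK \<nu> (- d) * G1 (x) (- y - g)"
    unfolding G2_def opK_alt by (simp only: e13 e14)
  have G_19: "G1 (x) (y) = wR \<kappa> (a) * f (y - h) (x + h) + zR \<kappa> (a) * f (x) (y)"
    unfolding G1_def opR_alt by (simp only: e0)
  have G_20: "G1 (x) (- y - g) = wR \<kappa> (b) * f (- y - h - g) (x + h) + zR \<kappa> (b) * f (x) (- y - g)"
    unfolding G1_def opR_alt by (simp only: e11 e12)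
  have G_21: "G3 (x) (y) = wR \<kappa> (a) * G2 (y - h) (x + h) + zR \<kappa> (a) * G2 (x) (y)"
    unfolding G3_def opR_alt by (simp only: e0)
  have G_22: "G2 (y - h) (x + h) = wK \<nu> (c) * G1 (y - h) (- x - h - g) + zK \<nu> (c) * G1 (y - h) (x + h)"
    unfolding G2_def opK_alt by (simp only: e1 e2)
  have G_23: "G1 (y - h) (- x - h - g) = wR \<kappa> (b) * f (- x - 2 * h - g) (y) + zR \<kappa> (b) * f (y - h) (- x - h - g)"
    unfolding G1_def opR_alt by (simp only: e3 e4 e5)
  have G_24: "G1 (y - h) (x + h) = wR \<kappa> (- a) * f (x) (y) + zR \<kappa> (- a) * f (y - h) (x + h)"
    unfolding G1_def opR_alt by (simp only: e9 e4 e10)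
  have G_25: "G2 (x) (y) = wK \<nu> (d) * G1 (x) (- y - g) + zK \<nu> (d) * G1 (x) (y)"
    unfolding G2_def opK_alt by (simp only: e6)
  have SL: "F4 x y = ((wR \<kappa> (a) * wK \<nu> (c) * wR \<kappa> (b) * wK \<nu> (d))) * f (- x - 2 * h - g) (- y - g) + ((wR \<kappa> (a) * wK \<nu> (c) * wR \<kappa> (b) * zK \<nu> (d))) * f (- x - 2 * h - g) (y) + ((zR \<kappa> (a) * wK \<nu> (d) * wR \<kappa> (b) * wK \<nu> (c))) * f (- y - h - g) (- x - h - g) + ((zR \<kappa> (a) * wK \<nu> (d) * wR \<kappa> (b) * zK \<nu> (c))) * f (- y - h - g) (x + h) + ((wR \<kappa> (a) * zK \<nu> (c) * wR \<kappa> (- a) * wK \<nu> (d)) + (zR \<kappa> (a) * wK \<nu> (d) * zR \<kappa> (b) * zK \<nu> (- d)) + (zR \<kappa> (a) * zK \<nu> (d) * zR \<kappa> (a) * wK \<nu> (d))) * f (x) (- y - g) + ((wR \<kappa> (a) * zK \<nu> (c) * wR \<kappa> (- a) * zK \<nu> (d)) + (zR \<kappa> (a) * wK \<nu> (d) * zR \<kappa> (b) * wK \<nu> (- d)) + (zR \<kappa> (a) * zK \<nu> (d) * zR \<kappa> (a) * zK \<nu> (d))) * f (x) (y) + ((wR \<kappa> (a) * wK \<nu> (c) * zR \<kappa> (b) * zK \<nu> (- c)) + (wR \<kappa> (a) * zK \<nu> (c) * zR \<kappa> (- a) * wK \<nu> (c)) + (zR \<kappa> (a) * zK \<nu> (d)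 * wR \<kappa> (a) * wK \<nu> (c))) * f (y - h) (- x - h - g) + ((wR \<kappa> (a) * wK \<nu> (c) * zR \<kappa> (b) * wK \<nu> (- c)) + (wR \<kappa> (a) * zK \<nu> (c) * zR \<kappa> (- a) * zK \<nu> (c)) + (zR \<kappa> (a) * zK \<nu> (d) * wR \<kappa> (a) * zK \<nu> (c))) * f (y - h) (x + h)"
    by (simp only: F_0 F_1 F_2 F_3 F_4 F_5 F_6 F_7 F_8 F_9 F_10 F_11 F_12 G_13 G_14 G_15 G_16 G_17 G_18 G_19 G_20 G_21 G_22 G_23 G_24 G_25) algebra
  have SR: "G4 x y = ((wK \<nu> (d) * wR \<kappa> (b) * wK \<nu> (c) * wR \<kappa> (a))) * f (- x - 2 * h - g) (- y - g) + ((zK \<nu> (d) * wR \<kappa> (a) * wK \<nu> (c) * wR \<kappa> (b))) * f (- x - 2 * h - g) (y) + ((wK \<nu> (d) * wR \<kappa> (b) * wK \<nu> (c) * zR \<kappa> (a))) * f (- y - h - g) (- x - h - g) + ((wK \<nu> (d) * wR \<kappa> (b) * zK \<nu> (c) * zR \<kappa> (- b)) + (wK \<nu> (d) * zR \<kappa> (b) * zK \<nu> (- d) * wR \<kappa> (b)) + (zK \<nu> (d) * zR \<kappa> (a) * wK \<nu> (d) * wR \<kappa> (b))) * f (- y - h - g) (x + h) + ((wK \<nu> (d) * wR \<kappa> (b) * zK \<nu> (c) * wR \<kappa> (- b)) + (wK \<nu> (d) * zR \<kappa> (b) * zK \<nu> (- d) * zR \<kappa> (b)) + (zK \<nu> (d)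 * zR \<kappa> (a) * wK \<nu> (d) * zR \<kappa> (b))) * f (x) (- y - g) + ((wK \<nu> (d) * zR \<kappa> (b) * wK \<nu> (- d) * zR \<kappa> (a)) + (zK \<nu> (d) * wR \<kappa> (a) * zK \<nu> (c) * wR \<kappa> (- a)) + (zK \<nu> (d) * zR \<kappa> (a) * zK \<nu> (d) * zR \<kappa> (a))) * f (x) (y) + ((zK \<nu> (d) * wR \<kappa> (a) * wK \<nu> (c) * zR \<kappa> (b))) * f (y - h) (- x - h - g) + ((wK \<nu> (d) * zR \<kappa> (b) * wK \<nu> (- d) * wR \<kappa> (a)) + (zK \<nu> (d) * wR \<kappa> (a) * zK \<nu> (c) * zR \<kappa> (- a)) + (zK \<nu> (d) * zR \<kappa> (a) * zK \<nu> (d) * wR \<kappa> (a))) * f (y - h) (x + h)"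
    by (simp only: F_0 F_1 F_2 F_3 F_4 F_5 F_6 F_7 F_8 F_9 F_10 F_11 F_12 G_13 G_14 G_15 G_16 G_17 G_18 G_19 G_20 G_21 G_22 G_23 G_24 G_25) algebra
  have C0: "(wR \<kappa> (a) * wK \<nu> (c) * wR \<kappa> (b) * wK \<nu> (d)) = (wK \<nu> (d) * wR \<kappa> (b) * wK \<nu> (c) * wR \<kappa> (a))"
    unfolding wR_def zR_def wK_def zK_def using a0 b0 c0 d0 by (simp add: field_simps; (use cd in algebra))
  have C1: "(wR \<kappa> (a) * wK \<nu> (c) * wR \<kappa> (b) * zK \<nu> (d)) = (zK \<nu> (d) * wR \<kappa> (a) * wK \<nu> (c) * wR \<kappa> (b))"
    unfolding wR_def zR_def wK_def zK_def using a0 b0 c0 d0 by (simp add: field_simps; (use cd in algebra))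
  have C2: "(zR \<kappa> (a) * wK \<nu> (d) * wR \<kappa> (b) * wK \<nu> (c)) = (wK \<nu> (d) * wR \<kappa> (b) * wK \<nu> (c) * zR \<kappa> (a))"
    unfolding wR_def zR_def wK_def zK_def using a0 b0 c0 d0 by (simp add: field_simps; (use cd in algebra))
  have C3: "(zR \<kappa> (a) * wK \<nu> (d) * wR \<kappa> (b) * zK \<nu> (c)) = (wK \<nu> (d) * wR \<kappa> (b) * zK \<nu> (c) * zR \<kappa> (- b)) + (wK \<nu> (d) * zR \<kappa> (b) * zK \<nu> (- d) * wR \<kappa> (b)) + (zK \<nu> (d) * zR \<kappa> (a) * wK \<nu> (d) * wR \<kappa> (b))"
    unfolding wR_def zR_def wK_def zK_def using a0 b0 c0 d0 by (simp add: field_simps; (use cd in algebra))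
  have C4: "(wR \<kappa> (a) * zK \<nu> (c) * wR \<kappa> (- a) * wK \<nu> (d)) + (zR \<kappa> (a) * wK \<nu> (d) * zR \<kappa> (b) * zK \<nu> (- d)) + (zR \<kappa> (a) * zK \<nu> (d) * zR \<kappa> (a) * wK \<nu> (d)) = (wK \<nu> (d) * wR \<kappa> (b) * zK \<nu> (c) * wR \<kappa> (- b)) + (wK \<nu> (d) * zR \<kappa> (b) * zK \<nu> (- d) * zR \<kappa> (b)) + (zK \<nu> (d) * zR \<kappa> (a) * wK \<nu> (d) * zR \<kappa> (b))"
    unfolding wR_def zR_def wK_def zK_def using a0 b0 c0 d0 by (simp add: field_simps; (use cd in algebra))
  have C5: "(wR \<kappa> (a) * zK \<nu> (c) * wR \<kappa> (- a) * zK \<nu> (d)) + (zR \<kappa> (a) * wK \<nu> (d) * zR \<kappa> (b) * wK \<nu> (- d)) + (zR \<kappa> (a) * zK \<nu> (d) * zR \<kappa> (a) * zK \<nu> (d)) = (wK \<nu> (d) * zR \<kappa> (b) * wK \<nu> (- d) * zR \<kappa> (a)) + (zK \<nu> (d) * wR \<kappa> (a) * zK \<nu> (c) * wR \<kappa> (- a)) + (zK \<nu> (d) * zR \<kappa> (a) * zK \<nu> (d) * zR \<kappa> (a))"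
    unfolding wR_def zR_def wK_def zK_def using a0 b0 c0 d0 by (simp add: field_simps; (use cd in algebra))
  have C6: "(wR \<kappa> (a) * wK \<nu> (c) * zR \<kappa> (b) * zK \<nu> (- c)) + (wR \<kappa> (a) * zK \<nu> (c) * zR \<kappa> (- a) * wK \<nu> (c)) + (zR \<kappa> (a) * zK \<nu> (d) * wR \<kappa> (a) * wK \<nu> (c)) = (zK \<nu> (d) * wR \<kappa> (a) * wK \<nu> (c) * zR \<kappa> (b))"
    unfolding wR_def zR_def wK_def zK_def using a0 b0 c0 d0 by (simp add: field_simps; (use cd in algebra))
  have C7: "(wR \<kappa> (a) * wK \<nu> (c) * zR \<kappa> (b) * wK \<nu> (- c)) + (wR \<kappa> (a) * zK \<nu> (c) * zR \<kappa> (- a) * zK \<nu> (c)) + (zR \<kappa> (a) * zK \<nu> (d) * wR \<kappa> (a) * zK \<nu> (c)) = (wK \<nu> (d) * zR \<kappa> (b) * wK \<nu> (- d) * wR \<kappa> (a)) + (zK \<nu> (d) * wR \<kappa> (a) * zK \<nu> (c) * zR \<kappa> (- a)) + (zK \<nu> (d) * zR \<kappa> (a) * zK \<nu> (d) * wR \<kappa> (a))"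
    unfolding wR_def zR_def wK_def zK_def using a0 b0 c0 d0 by (simp add: field_simps; (use cd in algebra))
  have "F4 x y = G4 x y" unfolding SL SR C0 C1 C2 C3 C4 C5 C6 C7 ..
  thus ?thesis by (simp only: F1_def F2_def F3_def F4_def G1_def G2_def G3_def G4_def)
qed

definition mon :: "nat \<times> nat \<Rightarrow> complex \<Rightarrow> complex \<Rightarrow> complex" where
  "mon c x y = x ^ fst c * y ^ snd c"

definition pf :: "(nat \<times> nat) set \<Rightarrow> (nat \<times> nat \<Rightarrow> nat \<times> nat \<Rightarrow> complex) \<Rightarrow> nat \<times> nat \<Rightarrow> complex \<Rightarrow> complex \<Rightarrow> complex" where
  "pf S M a x y = (\<Sum>c\<in>S. M a c * mon c x y)"

lemma fin_idx2[simp]: "finite (idx2 N)" by (simp add: idx2_def)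

lemma pf_idx2: "pf (idx2 N) M a x y = (\<Sum>k<N. \<Sum>l<N. M a (k,l) * x^k * y^l)"
  unfolding pf_def idx2_def mon_def
  by (simp add: sum.cartesian_product atLeast0LessThan case_prod_beta mult.assoc)

lemma Rcheck_entry: assumes "a \<in> idx2 N" shows "Rcheck N \<kappa> h a c = Rra \<kappa> h (snd a, fst a) c"
proof -
  have m: "(snd a, fst a) \<in> idx2 N" using assms by (auto simp: idx2_def)
  have "Rcheck N \<kappa> h a c = (\<Sum>k\<in>idx2 N. if k = (snd a, fst a) then Rra \<kappa> h k c else 0)"
    unfolding Rcheck_def mcomp_def flip_def by (rule sum.cong) auto
  also have "\<dots> = Rra \<kappa> h (snd a, fst a) c" using m by (simp add: sum.delta)
  finally show ?thesis .
qed

lemma pfR: assumes a: "a \<in> idx2 N" and h: "h \<noteq> 0" and xy: "x - y + h \<noteq> 0"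
  shows "pf (idx2 N) (Rcheck N \<kappa> h) a x y = opR \<kappa> h (mon a) x y"
proof -
  have i: "snd a < N" "fst a < N" using a by (auto simp: idx2_def)
  have "pf (idx2 N) (Rcheck N \<kappa> h) a x y = (\<Sum>k<N. \<Sum>l<N. Rra \<kappa> h (snd a, fst a) (k,l) * x^k * y^l)"
    unfolding pf_idx2 Rcheck_entry[OF a] ..
  also have "\<dots> = (x+h)^snd a*(y-h)^fst a + \<kappa>*((x+h)^snd a*(y-h)^fst a - y^snd a*x^fst a)/(x-y+h)"
    by (rule Rpoly[OF i h xy])
  also have "\<dots> = opR \<kappa> h (mon a) x y" unfolding opR_def mon_def by (simp add: mult_ac)
  finally show ?thesis .
qed

lemma pfK: assumes a: "a \<in> idx2 N" and yg: "2*y + g \<noteq> 0"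
  shows "pf (idx2 N) (K2 (Kra \<nu> g)) a x y = opK \<nu> g (mon a) x y"
proof -
  have i: "fst a < N" "snd a < N" using a by (auto simp: idx2_def)
  have "pf (idx2 N) (K2 (Kra \<nu> g)) a x y = (\<Sum>k<N. \<Sum>l<N. (if k = fst a then Kra \<nu> g (snd a) l else 0) * x^k * y^l)"
    unfolding pf_idx2 K2_def fst_conv snd_conv ..
  also have "\<dots> = (\<Sum>k<N. if k = fst a then x^k * (\<Sum>l<N. Kra \<nu> g (snd a) l * y^l) else 0)"
    by (rule sum.cong[OF refl]) (simp add: sum_distrib_left mult_ac)
  also have "\<dots> = x^fst a * (\<Sum>l<N. Kra \<nu> g (snd a) l * y^l)" using i by (simp add: sum.delta)
  also have "\<dots> = x^fst a * ((-y-g)^snd a - 2*\<nu>*(y^snd a - (-y-g)^snd a)/(2*y+g))"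
    by (simp only: Kpoly[OF i(2) yg])
  also have "\<dots> = opK \<nu> g (mon a) x y" unfolding opK_def mon_def by (simp add: algebra_simps)
  finally show ?thesis .
qed

lemma pf_mcomp: assumes "finite S"
  shows "pf S (mcomp S A B) a x y = (\<Sum>m\<in>S. B a m * pf S A m x y)"
proof -
  have "pf S (mcomp S A B) a x y = (\<Sum>c\<in>S. \<Sum>m\<in>S. B a m * A m c * mon c x y)"
    unfolding pf_def mcomp_def by (simp add: sum_distrib_right)
  also have "\<dots> = (\<Sum>m\<in>S. \<Sum>c\<in>S. B a m * A m c * mon c x y)" by (rule sum.swap)
  also have "\<dots> = (\<Sum>m\<in>S. B a m * pf S A m x y)" unfolding pf_def by (simp add: sum_distrib_left mult.assoc)
  finally show ?thesis .
qed

lemma pf_fun: "pf S B a = (\<lambda>p q. \<Sum>m\<in>S. B a m * mon m p q)"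
  by (rule ext, rule ext) (simp add: pf_def)

lemma opR_lin: "opR \<kappa> h (\<lambda>p q. \<Sum>m\<in>S. c m * F m p q) x y = (\<Sum>m\<in>S. c m * opR \<kappa> h (F m) x y)"
  unfolding opR_def
  by (simp add: sum_distrib_left sum.distrib sum_subtractf[symmetric] sum_divide_distrib algebra_simps)

lemma opK_lin: "opK \<nu> g (\<lambda>p q. \<Sum>m\<in>S. c m * F m p q) x y = (\<Sum>m\<in>S. c m * opK \<nu> g (F m) x y)"
  unfolding opK_def
  by (simp add: sum_distrib_left sum.distrib sum_subtractf[symmetric] sum_divide_distrib algebra_simps)

definition gen :: "complex \<Rightarrow> complex \<Rightarrow> complex \<Rightarrow> complex \<Rightarrow> bool" where
  "gen h g p q = (p - q + h \<noteq> 0 \<and> p + q + g + h \<noteq> 0 \<and> 2*p + g + 2*h \<noteq> 0 \<and> 2*q + g \<noteq> 0)"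

lemma gen_sig: "gen h g p q \<Longrightarrow> gen h g (q - h) (p + h)"
proof -
  assume G: "gen h g p q"
  have e: "(q - h) - (p + h) + h = - (p - q + h)" "(q - h) + (p + h) + g + h = p + q + g + h"
       "2*(q - h) + g + 2*h = 2*q + g" "2*(p+h) + g = 2*p + g + 2*h" by (simp_all add: algebra_simps)
  show ?thesis using G unfolding gen_def e neg_equal_0_iff_equal by blast
qed

lemma gen_tau: "gen h g p q \<Longrightarrow> gen h g p (- q - g)"
proof -
  assume G: "gen h g p q"
  have e: "p - (- q - g) + h = p + q + g + h" "p + (- q - g) + g + h = p - q + h"
       "2*(- q - g) + g = - (2*q + g)" by (simp_all add: algebra_simps)
  show ?thesis using G unfolding gen_def e neg_equal_0_iff_equal by blast
qed

lemma stepR: assumes h: "h \<noteq> 0" and a: "a \<in> idx2 N"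
  and IH: "\<And>p q. gen h g p q \<Longrightarrow> pf (idx2 N) B a p q = F p q" and G: "gen h g x y"
  shows "pf (idx2 N) (mcomp (idx2 N) (Rcheck N \<kappa> h) B) a x y = opR \<kappa> h F x y"
proof -
  have fin: "finite (idx2 N)" by (simp add: idx2_def)
  have xy: "x - y + h \<noteq> 0" using G by (simp add: gen_def)
  have "pf (idx2 N) (mcomp (idx2 N) (Rcheck N \<kappa> h) B) a x y = (\<Sum>m\<in>idx2 N. B a m * opR \<kappa> h (mon m) x y)"
    unfolding pf_mcomp[OF fin] by (rule sum.cong[OF refl]) (simp add: pfR[OF _ h xy])
  also have "\<dots> = opR \<kappa> h (pf (idx2 N) B a) x y" unfolding pf_fun opR_lin ..
  also have "\<dots> = opR \<kappa> h F x y" unfolding opR_def using IH[OF G] IH[OF gen_sig[OF G]] by simp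
  finally show ?thesis .
qed

lemma stepK: assumes a: "a \<in> idx2 N"
  and IH: "\<And>p q. gen h g p q \<Longrightarrow> pf (idx2 N) B a p q = F p q" and G: "gen h g x y"
  shows "pf (idx2 N) (mcomp (idx2 N) (K2 (Kra \<nu> g)) B) a x y = opK \<nu> g F x y"
proof -
  have fin: "finite (idx2 N)" by (simp add: idx2_def)
  have yg: "2*y + g \<noteq> 0" using G by (simp add: gen_def)
  have "pf (idx2 N) (mcomp (idx2 N) (K2 (Kra \<nu> g)) B) a x y = (\<Sum>m\<in>idx2 N. B a m * opK \<nu> g (mon m) x y)"
    unfolding pf_mcomp[OF fin] by (rule sum.cong[OF refl]) (simp add: pfK[OF _ yg])
  also have "\<dots> = opK \<nu> g (pf (idx2 N) B a) x y" unfolding pf_fun opK_lin ..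
  also have "\<dots> = opK \<nu> g F x y" unfolding opK_def using IH[OF G] IH[OF gen_tau[OF G]] by simp
  finally show ?thesis .
qed

lemma gen_generic: assumes y: "y \<notin> {- g / 2}" and x: "x \<notin> {y - h, - y - g - h, - (g + 2*h) / 2}"
  shows "gen h g x y"
proof -
  have 1: "x - y + h \<noteq> 0"
  proof
    assume "x - y + h = 0" hence "x = y - h" by (simp add: algebra_simps) 
    thus False using x by simp
  qed
  have 2: "x + y + g + h \<noteq> 0"
  proof
    assume z: "x + y + g + h = 0"
    have "x = (x + y + g + h) - y - g - h" by (simp add: algebra_simps)
    hence "x = - y - g - h" unfolding z by simp
    thus False using x by simp
  qed
  have 3: "2*x + g + 2*h \<noteq> 0"
  proof
    assume z: "2*x + g + 2*h = 0"
    have "x = ((2*x + g + 2*h) - (g + 2*h)) / 2" by (simp add: field_simps)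
    hence "x = - (g + 2*h) / 2" unfolding z by simp
    thus False using x by simp
  qed
  have 4: "2*y + g \<noteq> 0"
  proof
    assume z: "2*y + g = 0"
    have "y = ((2*y + g) - g) / 2" by (simp add: field_simps)
    hence "y = - g / 2" unfolding z by simp
    thus False using y by simp
  qed
  show ?thesis using 1 2 3 4 by (simp add: gen_def)
qed

lemma refl_entries: assumes h: "h \<noteq> 0" and a: "a \<in> idx2 N" and b: "b \<in> idx2 N"
  shows "mcomp (idx2 N) (Rcheck N \<kappa> h)
              (mcomp (idx2 N) (K2 (Kra \<nu> g))
                (mcomp (idx2 N) (Rcheck N \<kappa> h) (K2 (Kra \<nu> g)))) a b
          = mcomp (idx2 N) (K2 (Kra \<nu> g))
              (mcomp (idx2 N) (Rcheck N \<kappa> h)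
                (mcomp (idx2 N) (K2 (Kra \<nu> g)) (Rcheck N \<kappa> h))) a b"
proof -
  define S where "S = idx2 N"
  define Rc where "Rc = Rcheck N \<kappa> h"
  define Kc where "Kc = K2 (Kra \<nu> g)"
  define LM where "LM = mcomp S Rc (mcomp S Kc (mcomp S Rc Kc))"
  define RM where "RM = mcomp S Kc (mcomp S Rc (mcomp S Kc Rc))"
  have L1: "pf S Kc a p q = opK \<nu> g (mon a) p q" if "gen h g p q" for p q
    unfolding S_def Kc_def by (rule pfK[OF a]) (use that in \<open>simp add: gen_def\<close>)
  have L2: "pf S (mcomp S Rc Kc) a p q = opR \<kappa> h (opK \<nu> g (mon a)) p q" if "gen h g p q" for p q
    unfolding S_def Rc_def by (rule stepR[OF h a L1[unfolded S_def] that])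
  have L3: "pf S (mcomp S Kc (mcomp S Rc Kc)) a p q = opK \<nu> g (opR \<kappa> h (opK \<nu> g (mon a))) p q" if "gen h g p q" for p q
    unfolding S_def Kc_def by (rule stepK[OF a L2[unfolded S_def Kc_def] that])
  have L4: "pf S LM a p q = opR \<kappa> h (opK \<nu> g (opR \<kappa> h (opK \<nu> g (mon a)))) p q" if "gen h g p q" for p q
    unfolding LM_def S_def Rc_def by (rule stepR[OF h a L3[unfolded S_def Rc_def] that])
  have M1: "pf S Rc a p q = opR \<kappa> h (mon a) p q" if "gen h g p q" for p q
    unfolding S_def Rc_def by (rule pfR[OF a h]) (use that in \<open>simp add: gen_def\<close>)
  have M2: "pf S (mcomp S Kc Rc) a p q = opK \<nu> g (opR \<kappa> h (mon a)) p q" if "gen h g p q" for p q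
    unfolding S_def Kc_def by (rule stepK[OF a M1[unfolded S_def] that])
  have M3: "pf S (mcomp S Rc (mcomp S Kc Rc)) a p q = opR \<kappa> h (opK \<nu> g (opR \<kappa> h (mon a))) p q" if "gen h g p q" for p q
    unfolding S_def Rc_def by (rule stepR[OF h a M2[unfolded S_def Rc_def] that])
  have M4: "pf S RM a p q = opK \<nu> g (opR \<kappa> h (opK \<nu> g (opR \<kappa> h (mon a)))) p q" if "gen h g p q" for p q
    unfolding RM_def S_def Kc_def by (rule stepK[OF a M3[unfolded S_def Kc_def] that])
  have E: "pf S LM a p q = pf S RM a p q" if "gen h g p q" for p q
    unfolding L4[OF that] M4[OF that] using that unfolding gen_def by (intro refl_abstract) auto
  obtain k l where bkl: "b = (k,l)" by fastforce
  have kl: "k < N" "l < N" using b bkl by (auto simp: idx2_def)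
  have "(\<lambda>c. LM a c - RM a c) (k,l) = 0"
  proof (rule poly2_zero[where Y = "{- g / 2}" and F = "\<lambda>y. {y - h, - y - g - h, - (g + 2*h) / 2}"])
    fix x y assume y: "y \<notin> {- g / 2}" and x: "x \<notin> {y - h, - y - g - h, - (g + 2*h) / 2}"
    have "(\<Sum>kl\<in>{0..<N}\<times>{0..<N}. (LM a kl - RM a kl) * x^fst kl * y^snd kl) = pf S LM a x y - pf S RM a x y"
      unfolding pf_def S_def idx2_def mon_def by (simp add: sum_subtractf algebra_simps)
    also have "\<dots> = 0" using E[OF gen_generic[OF y x]] by simp
    finally show "(\<Sum>kl\<in>{0..<N}\<times>{0..<N}. (LM a kl - RM a kl) * x^fst kl * y^snd kl) = 0" .
  qed (use kl in auto)
  thus ?thesis unfolding bkl LM_def RM_def S_def Rc_def Kc_def by simp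
qed

lemma Ksq: assumes j: "j < N" and k: "k < N"
  shows "mcomp {0..<N} (Kra \<nu> g) (Kra \<nu> g) j k = idm j k"
proof -
  have "(\<lambda>k. mcomp {0..<N} (Kra \<nu> g) (Kra \<nu> g) j k - idm j k) k = 0"
  proof (rule poly1_zero[where E = "{- g / 2}"])
    fix y :: complex assume y: "y \<notin> {- g / 2}"
    have yg: "2*y + g \<noteq> 0"
    proof
      assume z: "2*y + g = 0"
      have "y = ((2*y + g) - g) / 2" by (simp add: field_simps)
      hence "y = - g / 2" unfolding z by simp
      thus False using y by simp
    qed
    have yg': "2*(-y-g) + g \<noteq> 0" using yg by (simp add: algebra_simps) (metis add.commute add_eq_0_iff2 minus_add_distrib mult_2 neg_eq_iff_add_eq_0)
    have P: "(\<Sum>m<N. Kra \<nu> g j m * z^m) = opK1 \<nu> g (\<lambda>z. z^j) z" if "2*z+g \<noteq> 0" for z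
      unfolding opK1_def by (rule Kpoly[OF j that])
    have "(\<Sum>k<N. mcomp {0..<N} (Kra \<nu> g) (Kra \<nu> g) j k * y^k) = (\<Sum>m<N. Kra \<nu> g j m * (\<Sum>k<N. Kra \<nu> g m k * y^k))"
      unfolding mcomp_def atLeast0LessThan
      by (simp add: sum_distrib_left sum_distrib_right mult.assoc) (rule sum.swap)
    also have "\<dots> = (\<Sum>m<N. Kra \<nu> g j m * opK1 \<nu> g (\<lambda>z. z^m) y)"
      by (rule sum.cong[OF refl]) (simp add: opK1_def Kpoly[OF _ yg])
    also have "\<dots> = opK1 \<nu> g (\<lambda>z. \<Sum>m<N. Kra \<nu> g j m * z^m) y"
      unfolding opK1_def
      by (simp add: sum_distrib_left sum.distrib sum_subtractf[symmetric] sum_divide_distrib algebra_simps)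
    also have "\<dots> = opK1 \<nu> g (opK1 \<nu> g (\<lambda>z. z^j)) y"
      unfolding opK1_def P[OF yg] P[OF yg'] ..
    also have "\<dots> = y^j" by (rule opK1_invol[OF yg])
    finally have 1: "(\<Sum>k<N. mcomp {0..<N} (Kra \<nu> g) (Kra \<nu> g) j k * y^k) = y^j" .
    have "(\<Sum>k<N. idm j k * y^k) = (\<Sum>k<N. if j = k then y^k else 0)" by (rule sum.cong) (auto simp: idm_def)
    hence 2: "(\<Sum>k<N. idm j k * y^k) = y^j" using j by (simp add: sum.delta)
    show "(\<Sum>k<N. (mcomp {0..<N} (Kra \<nu> g) (Kra \<nu> g) j k - idm j k) * y^k) = 0"
      using 1 2 by (simp add: left_diff_distrib sum_subtractf)
  qed (use k in auto)
  thus ?thesis by simp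
qed

theorem mainTheorem10:
  fixes N :: nat and \<kappa> h \<nu> g :: complex
  assumes "N \<ge> 1" and "h \<noteq> 0"
  shows "(\<forall>j<N. \<forall>k<N. mcomp {0..<N} (Kra \<nu> g) (Kra \<nu> g) j k = idm j k) \<and>
         (\<forall>a\<in>idx2 N. \<forall>b\<in>idx2 N.
            mcomp (idx2 N) (Rcheck N \<kappa> h)
              (mcomp (idx2 N) (K2 (Kra \<nu> g))
                (mcomp (idx2 N) (Rcheck N \<kappa> h) (K2 (Kra \<nu> g)))) a b
          = mcomp (idx2 N) (K2 (Kra \<nu> g))
              (mcomp (idx2 N) (Rcheck N \<kappa> h)
                (mcomp (idx2 N) (K2 (Kra \<nu> g)) (Rcheck N \<kappa> h))) a b)"
  using Ksq refl_entries[OF assms(2)] by blast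

end
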